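(* For every $n\ge2$, within the space of real CPS tensors in $\mathbb{R}^{n\times n\times n\times n}$, one has the strict inclusions \[ \vec S^{n^2\times n^2}_+\subsetneq PSD^{4,n}_+\subsetneq \mathbb{R}CPS^{n^4}_+ . \] Moreover, already among real symmetric tensors, $\vec S^{n^2\times n^2}_+$ is a proper subset of $\mathbb{R}CPS^{n^4}_+$.
   Context: A real tensor $\mathcal{A}\in\mathbb{R}^{n\times n\times n\times n}$ is (real) CPS if $\mathcal{A}_{ijkl}=\mathcal{A}_{klij}=\mathcal{A}_{jikl}=\mathcal{A}_{ijlk}$ for all indices; symmetric if invariant under all index permutations. For a real CPS $\mathcal{A}$: $\mathcal{A}\in\mathbb{R}CPS^{n^4}_+$ iff $\sum_{ijkl}\mathcal{A}_{ijkl}x_ix_jx_kx_l\ge0$ for all $x\in\mathbb{R}^n$; $\mathcal{A}\in\vec S^{n^2\times n^2}_+$ (matrix PSD) iff $\sum_{ijkl}\mathcal{A}_{ijkl}X_{ij}X_{kl}\ge0$ for all real symmetric $X\in\mathbb{R}^{n\times n}$; $\mathcal{A}\in PSD^{4,n}_+$ (general PSD) iff $\sum_{ijkl}\mathcal{A}_{ijkl}X_{ij}X_{kl}\ge0$ for all real symmetric positive semidefinite $X\in\mathbb{R}^{n\times n}$. *)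

theory Defs
  imports "HOL-Analysis.Analysis" "HOL-Combinatorics.Permutations"
begin

text \<open>Real fourth-order tensors over an index type 'n (with CARD('n) = n).\<close>
type_synonym 'n tensor4 = "'n \<Rightarrow> 'n \<Rightarrow> 'n \<Rightarrow> 'n \<Rightarrow> real"

definition is_CPS :: "('n::finite) tensor4 \<Rightarrow> bool" where
  "is_CPS A \<longleftrightarrow> (\<forall>i j k l. A i j k l = A k l i j \<and> A i j k l = A j i k l \<and> A i j k l = A i j l k)"

definition is_sym_tensor :: "('n::finite) tensor4 \<Rightarrow> bool" where
  "is_sym_tensor A \<longleftrightarrow> (\<forall>(f::nat \<Rightarrow> 'n) \<sigma>. \<sigma> permutes {0..<4} \<longrightarrow>
      A (f (\<sigma> 0)) (f (\<sigma> 1)) (f (\<sigma> 2)) (f (\<sigma> 3)) = A (f 0) (f 1) (f 2) (f 3))"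

definition sym_mat :: "('n::finite \<Rightarrow> 'n \<Rightarrow> real) \<Rightarrow> bool" where
  "sym_mat X \<longleftrightarrow> (\<forall>i j. X i j = X j i)"

definition psd_mat :: "('n::finite \<Rightarrow> 'n \<Rightarrow> real) \<Rightarrow> bool" where
  "psd_mat X \<longleftrightarrow> sym_mat X \<and> (\<forall>v. (\<Sum>i\<in>UNIV. \<Sum>j\<in>UNIV. X i j * v i * v j) \<ge> 0)"

definition tensor_form :: "('n::finite) tensor4 \<Rightarrow> ('n \<Rightarrow> real) \<Rightarrow> real" where
  "tensor_form A x = (\<Sum>i\<in>UNIV. \<Sum>j\<in>UNIV. \<Sum>k\<in>UNIV. \<Sum>l\<in>UNIV. A i j k l * x i * x j * x k * x l)"

definition bilin_form :: "('n::finite) tensor4 \<Rightarrow> ('n \<Rightarrow> 'n \<Rightarrow> real) \<Rightarrow> real" where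
  "bilin_form A X = (\<Sum>i\<in>UNIV. \<Sum>j\<in>UNIV. \<Sum>k\<in>UNIV. \<Sum>l\<in>UNIV. A i j k l * X i j * X k l)"

definition RCPS_plus :: "('n::finite) tensor4 set" where
  "RCPS_plus = {A. is_CPS A \<and> (\<forall>x. tensor_form A x \<ge> 0)}"

text \<open>vec S^{n^2 x n^2}_+ : CPS tensors that are PSD as n^2 x n^2 matrices (on symmetric X).\<close>
definition MatPSD_plus :: "('n::finite) tensor4 set" where
  "MatPSD_plus = {A. is_CPS A \<and> (\<forall>X. sym_mat X \<longrightarrow> bilin_form A X \<ge> 0)}"

definition GenPSD_plus :: "('n::finite) tensor4 set" where
  "GenPSD_plus = {A. is_CPS A \<and> (\<forall>X. psd_mat X \<longrightarrow> bilin_form A X \<ge> 0)}"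

end

theory Submission
  imports Defs
begin

definition dd :: "'a \<Rightarrow> 'a \<Rightarrow> real" where "dd x y = (if x = y then 1 else 0)"

lemma sdd1[simp]: "(\<Sum>l\<in>(UNIV::(_::finite) set). dd l s * f l) = (f s::real)"
  by (subst sum.cong[OF refl, of _ _ "\<lambda>l. if l = s then f l else 0"]) (auto simp: dd_def sum.delta')

lemma sdd2[simp]: "(\<Sum>l\<in>(UNIV::(_::finite) set). f l * dd l s) = (f s::real)"
  using sdd1[of s f] by (simp add: mult.commute)

definition EE :: "'n \<Rightarrow> 'n \<Rightarrow> 'n \<Rightarrow> 'n \<Rightarrow> ('n::finite) tensor4" where
  "EE p q r s = (\<lambda>i j k l. dd i p * dd j q * dd k r * dd l s)"

lemma bilin_EE: "bilin_form (EE p q r s) X = X p q * X r s"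
proof -
  have e: "\<And>i j k l. dd i p * dd j q * dd k r * dd l s * X i j * X k l = dd i p * (dd j q * (dd k r * (dd l s * (X i j * X k l))))" by (simp add: ac_simps)
  show ?thesis unfolding bilin_form_def EE_def by (simp only: e sum_distrib_left[symmetric] sdd1)
qed

lemma tensor_EE: "tensor_form (EE p q r s) x = x p * x q * x r * x s"
proof -
  have e: "\<And>i j k l. dd i p * dd j q * dd k r * dd l s * x i * x j * x k * x l = dd i p * (dd j q * (dd k r * (dd l s * (x i * x j * x k * x l))))" by (simp add: ac_simps)
  show ?thesis unfolding tensor_form_def EE_def by (simp only: e sum_distrib_left[symmetric] sdd1)
qed

lemma bilin_add: "bilin_form (\<lambda>i j k l. A i j k l + B i j k l) X = bilin_form A X + bilin_form B X"
  unfolding bilin_form_def by (simp add: algebra_simps sum.distrib)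

lemma bilin_smult: "bilin_form (\<lambda>i j k l. c * A i j k l) X = c * bilin_form A X"
  unfolding bilin_form_def by (simp add: algebra_simps sum_distrib_left)

lemma tensor_add: "tensor_form (\<lambda>i j k l. A i j k l + B i j k l) X = tensor_form A X + tensor_form B X"
  unfolding tensor_form_def by (simp add: algebra_simps sum.distrib)

lemma tensor_smult: "tensor_form (\<lambda>i j k l. c * A i j k l) X = c * tensor_form A X"
  unfolding tensor_form_def by (simp add: algebra_simps sum_distrib_left)

lemma Mat_sub_Gen: "MatPSD_plus \<subseteq> GenPSD_plus"
  unfolding MatPSD_plus_def GenPSD_plus_def psd_mat_def by auto

lemma tensor_bilin: "tensor_form A x = bilin_form A (\<lambda>i j. x i * x j)"
  unfolding tensor_form_def bilin_form_def by (simp add: ac_simps)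

lemma outer_psd: "psd_mat (\<lambda>i j. x i * x j :: real)"
proof -
  have "(\<Sum>i\<in>UNIV. \<Sum>j\<in>UNIV. x i * x j * v i * v j) = (\<Sum>i\<in>UNIV. x i * v i)^2" for v
    by (simp add: power2_eq_square sum_product ac_simps)
  then show ?thesis unfolding psd_mat_def sym_mat_def by (simp add: mult.commute)
qed

lemma Gen_sub_R: "GenPSD_plus \<subseteq> RCPS_plus"
  unfolding GenPSD_plus_def RCPS_plus_def using outer_psd by (auto simp: tensor_bilin)

definition TT :: "'n \<Rightarrow> 'n \<Rightarrow> ('n::finite) tensor4" where
  "TT a b = (\<lambda>i j k l. EE a a b b i j k l + EE a b a b i j k l + EE a b b a i j k l
     + EE b a a b i j k l + EE b a b a i j k l + EE b b a a i j k l)"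

lemma TT_cnt: "a \<noteq> b \<Longrightarrow> TT a b i j k l = (if dd i a + dd j a + dd k a + dd l a = 2 \<and> dd i b + dd j b + dd k b + dd l b = 2 then 1 else 0)"
  unfolding TT_def EE_def dd_def by auto

lemma cnt4: "(\<Sum>m\<in>{0..<4::nat}. g m) = g 0 + g 1 + g 2 + (g 3 :: real)"
  by (simp add: eval_nat_numeral atLeastLessThanSuc)

lemma TT_sym: "(a::'n::finite) \<noteq> b \<Longrightarrow> is_sym_tensor (TT a b)"
  unfolding is_sym_tensor_def
proof (intro allI impI)
  fix f :: "nat \<Rightarrow> 'n::finite" and \<sigma> :: "nat \<Rightarrow> nat" assume a: "a \<noteq> b" and p: "\<sigma> permutes {0..<4}"
  have "(\<Sum>m\<in>{0..<4}. dd (f (\<sigma> m)) c) = (\<Sum>m\<in>{0..<4}. dd (f m) c)" for c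
    using sum.reindex_bij_betw[OF permutes_imp_bij[OF p], of "\<lambda>m. dd (f m) c"] .
  then show "TT a b (f (\<sigma> 0)) (f (\<sigma> 1)) (f (\<sigma> 2)) (f (\<sigma> 3)) = TT a b (f 0) (f 1) (f 2) (f 3)"
    using a by (simp add: TT_cnt cnt4)
qed

lemma TT_CPS: "(a::'n::finite) \<noteq> b \<Longrightarrow> is_CPS (TT a b)"
  unfolding is_CPS_def by (simp add: TT_cnt ac_simps)

lemma TT_bilin: "bilin_form (TT a b) X = X a a * X b b + X a b*X a b + X a b*X b a + X b a*X a b + X b a*X b a + X b b*X a a"
  unfolding TT_def by (simp only: bilin_add bilin_EE)

lemma TT_tensor: "tensor_form (TT a b) x = 6 * (x a * x b)^2"
  unfolding TT_def by (simp only: tensor_add tensor_EE) (simp add: power2_eq_square)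

definition CC :: "'n \<Rightarrow> 'n \<Rightarrow> ('n::finite) tensor4" where
  "CC a b = (\<lambda>i j k l. (-2) * EE a a b b i j k l + (-2) * EE b b a a i j k l + EE a b a b i j k l + EE a b b a i j k l
     + EE b a a b i j k l + EE b a b a i j k l)"

lemma CC_CPS: "is_CPS (CC a b)"
  unfolding is_CPS_def CC_def EE_def by (simp add: ac_simps)

lemma CC_bilin: "bilin_form (CC a b) X = -2 * X a a * X b b - 2 * X b b*X a a + X a b*X a b + X a b*X b a + X b a*X a b + X b a*X b a"
  unfolding CC_def by (simp only: bilin_add bilin_smult bilin_EE)

lemma CC_tensor: "tensor_form (CC a b) x = 0"
  unfolding CC_def by (simp only: tensor_add tensor_smult tensor_EE) (simp add: algebra_simps)

lemma psd_diag: "psd_mat X \<Longrightarrow> X a a \<ge> 0"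
proof -
  assume "psd_mat X"
  then have "(\<Sum>i\<in>UNIV. \<Sum>j\<in>UNIV. X i j * dd i a * dd j a) \<ge> 0" unfolding psd_mat_def by (auto dest: spec[of _ "\<lambda>i. dd i a"])
  then show ?thesis by simp
qed

lemma ind_psd: "psd_mat (\<lambda>i j. dd i (a::'n::finite) * dd j a + dd i b * dd j b)"
proof -
  have e: "\<And>i j. (dd i a * dd j a + dd i b * dd j b) * v i * v j = dd i a * (dd j a * (v i * v j)) + dd i b * (dd j b * (v i * v j))" for v :: "'n \<Rightarrow> real"
    by (simp add: algebra_simps)
  have "(\<Sum>i\<in>UNIV. \<Sum>j\<in>UNIV. (dd i a * dd j a + dd i b * dd j b) * v i * v j) = v a * v a + v b * v b" for v
    by (simp only: e sum.distrib sum_distrib_left[symmetric] sdd1)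
  then show ?thesis unfolding psd_mat_def sym_mat_def by (simp add: mult.commute)
qed

theorem mainTheorem19:
  assumes "CARD('n::finite) \<ge> 2"
  shows "(MatPSD_plus :: 'n tensor4 set) \<subset> GenPSD_plus
       \<and> (GenPSD_plus :: 'n tensor4 set) \<subset> RCPS_plus
       \<and> (MatPSD_plus \<inter> {A :: 'n tensor4. is_sym_tensor A}) \<subset> (RCPS_plus \<inter> {A. is_sym_tensor A})"
proof -
  obtain a b :: 'n where ab: "a \<noteq> b"
  proof -
    have "\<not> card (UNIV::'n set) \<le> Suc 0" using assms by simp
    then show ?thesis using that by (auto simp: card_le_Suc0_iff_eq)
  qed
  have dab: "dd a b = 0" "dd b a = 0" "dd a a = 1" "dd b b = 1" using ab by (auto simp: dd_def)
  define X :: "'n \<Rightarrow> 'n \<Rightarrow> real" where "X = (\<lambda>i j. dd i a * dd j a - dd i b * dd j b)"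
  have Xs: "sym_mat X" unfolding X_def sym_mat_def by (simp add: mult.commute)
  have "bilin_form (TT a b) X = -2" unfolding TT_bilin X_def using dab by simp
  then have T1: "TT a b \<notin> MatPSD_plus" using Xs unfolding MatPSD_plus_def by force
  have T2: "TT a b \<in> GenPSD_plus"
    unfolding GenPSD_plus_def
  proof (intro CollectI conjI allI impI)
    fix Y :: "'n \<Rightarrow> 'n \<Rightarrow> real" assume Y: "psd_mat Y"
    then have "Y a a \<ge> 0" "Y b b \<ge> 0" "Y b a = Y a b" by (auto simp: psd_diag psd_mat_def sym_mat_def)
    then show "bilin_form (TT a b) Y \<ge> 0" unfolding TT_bilin by (simp add: add_nonneg_nonneg)
  qed (rule TT_CPS[OF ab])
  have T3: "TT a b \<in> RCPS_plus" unfolding RCPS_plus_def using TT_CPS[OF ab] by (simp add: TT_tensor)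
  have C1: "CC a b \<in> RCPS_plus" unfolding RCPS_plus_def using CC_CPS by (simp add: CC_tensor)
  have "bilin_form (CC a b) (\<lambda>i j. dd i a * dd j a + dd i b * dd j b) = -4" unfolding CC_bilin using dab by simp
  then have C2: "CC a b \<notin> GenPSD_plus" using ind_psd[of a b] unfolding GenPSD_plus_def by force
  show ?thesis using Mat_sub_Gen Gen_sub_R T1 T2 T3 C1 C2 TT_sym[OF ab] by blast
qed

end
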